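(* Let $\Gamma\curvearrowright X, I$ be a stratified dynamical ideal with permutation model $W[[X]]$. Then in $W[[X]]$, every set is either a countable union of finite sets or contains an injective image of $\omega$.
   Context: Work in ZFC. $V[[X]]$ is the well-founded model of ZFCA with set of atoms exactly $X$ in which every set of elements is represented by an element; a group action of $\Gamma$ on $X$ extends to $V[[X]]$ by $\gamma\cdot A=\{\gamma\cdot B:B\in A\}$. $\mathrm{stab}(A)=\{\gamma:\gamma\cdot A=A\}$, $\mathrm{pstab}(a)=\{\gamma:\gamma\cdot B=B\ \forall B\in a\}$. A dynamical ideal $\Gamma\curvearrowright X, I$: a group $\Gamma$ acting on $X$ and a $\Gamma$-invariant ideal $I$ on $X$ containing all singletons. Its permutation model $W[[X]]$ is the class of $A\in V[[X]]$ such that $A$ and every element of its transitive closure are symmetric, where $A$ is symmetric if $\mathrm{pstab}(b)\subseteq\mathrm{stab}(A)$ for some $b\in I$. The dynamical ideal is stratified if there are $\Gamma$-invariant ideals $I_n$ ($n\in\omega$) on $X$ such that (1) $I_0\subseteq I_1\subseteq\cdots$ and $I=\bigcup_n I_n$; (2) for every $n$ and all sets $a$ and $b_m$ ($m\in\omega$) in $I_n$ there are $\gamma_m\in\mathrm{pstab}(a)$ with $\bigcup_m\gamma_m\cdot b_m\in I_{n+1}$. *)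

theory Defs
  imports "HOL-Algebra.Group_Action"
begin

definition set_ideal :: "'x set \<Rightarrow> 'x set set \<Rightarrow> bool" where
  "set_ideal X I \<longleftrightarrow> I \<subseteq> Pow X \<and> {} \<in> I \<and>
     (\<forall>a\<in>I. \<forall>b. b \<subseteq> a \<longrightarrow> b \<in> I) \<and> (\<forall>a\<in>I. \<forall>b\<in>I. a \<union> b \<in> I)"

definition invariant_family :: "('g, 'm) monoid_scheme \<Rightarrow> ('g \<Rightarrow> 'x \<Rightarrow> 'x) \<Rightarrow> 'x set set \<Rightarrow> bool" where
  "invariant_family G \<phi> I \<longleftrightarrow> (\<forall>g\<in>carrier G. \<forall>a\<in>I. \<phi> g ` a \<in> I)"

definition pstab :: "('g, 'm) monoid_scheme \<Rightarrow> ('g \<Rightarrow> 'x \<Rightarrow> 'x) \<Rightarrow> 'x set \<Rightarrow> 'g set" where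
  "pstab G \<phi> a = {g \<in> carrier G. \<forall>x\<in>a. \<phi> g x = x}"

definition dynamical_ideal :: "('g, 'm) monoid_scheme \<Rightarrow> 'x set \<Rightarrow> ('g \<Rightarrow> 'x \<Rightarrow> 'x) \<Rightarrow> 'x set set \<Rightarrow> bool" where
  "dynamical_ideal G X \<phi> I \<longleftrightarrow> group_action G X \<phi> \<and> set_ideal X I \<and>
     invariant_family G \<phi> I \<and> (\<forall>x\<in>X. {x} \<in> I)"

definition stratified :: "('g, 'm) monoid_scheme \<Rightarrow> 'x set \<Rightarrow> ('g \<Rightarrow> 'x \<Rightarrow> 'x) \<Rightarrow> 'x set set \<Rightarrow> bool" where
  "stratified G X \<phi> I \<longleftrightarrow> dynamical_ideal G X \<phi> I \<and>
     (\<exists>In :: nat \<Rightarrow> 'x set set.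
        (\<forall>n. set_ideal X (In n) \<and> invariant_family G \<phi> (In n)) \<and>
        (\<forall>n. In n \<subseteq> In (Suc n)) \<and> I = (\<Union>n. In n) \<and>
        (\<forall>n a (bs :: nat \<Rightarrow> 'x set). a \<in> In n \<longrightarrow> (\<forall>m. bs m \<in> In n) \<longrightarrow>
            (\<exists>gs :: nat \<Rightarrow> 'g. (\<forall>m. gs m \<in> pstab G \<phi> a) \<and>
                 (\<Union>m. \<phi> (gs m) ` bs m) \<in> In (Suc n))))"

text \<open>Elements of V[[X]] are represented (Mostowski/Aczel style) by nodes of a
well-founded membership graph: E c d means "c is an element of d", and
lab c = Some x means that c is the atom x (atoms have no elements).
Two nodes (possibly w.r.t. two labellings) denote the same object of V[[X]]
iff they are bisimilar.\<close>

definition vbisim :: "('c \<Rightarrow> 'c \<Rightarrow> bool) \<Rightarrow> ('c \<Rightarrow> 'x option) \<Rightarrow> ('c \<Rightarrow> 'x option)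
     \<Rightarrow> ('c \<Rightarrow> 'c \<Rightarrow> bool) \<Rightarrow> bool" where
  "vbisim E l1 l2 R \<longleftrightarrow> (\<forall>c d. R c d \<longrightarrow> l1 c = l2 d \<and>
      (\<forall>c'. E c' c \<longrightarrow> (\<exists>d'. E d' d \<and> R c' d')) \<and>
      (\<forall>d'. E d' d \<longrightarrow> (\<exists>c'. E c' c \<and> R c' d')))"

definition same_obj :: "('c \<Rightarrow> 'c \<Rightarrow> bool) \<Rightarrow> ('c \<Rightarrow> 'x option) \<Rightarrow> ('c \<Rightarrow> 'x option)
     \<Rightarrow> 'c \<Rightarrow> 'c \<Rightarrow> bool" where
  "same_obj E l1 l2 c d \<longleftrightarrow> (\<exists>R. vbisim E l1 l2 R \<and> R c d)"

definition presentation :: "'x set \<Rightarrow> ('c \<Rightarrow> 'c \<Rightarrow> bool) \<Rightarrow> ('c \<Rightarrow> 'x option) \<Rightarrow> bool" where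
  "presentation X E lab \<longleftrightarrow> wfP E \<and> (\<forall>c x. lab c = Some x \<longrightarrow> x \<in> X) \<and>
     (\<forall>c d. lab d \<noteq> None \<longrightarrow> \<not> E c d) \<and>
     (\<forall>c d. same_obj E lab lab c d \<longrightarrow> c = d)"

text \<open>Relabelling by g: node c w.r.t. this labelling denotes g \<cdot> (object of c).\<close>
definition act_lab :: "('g \<Rightarrow> 'x \<Rightarrow> 'x) \<Rightarrow> 'g \<Rightarrow> ('c \<Rightarrow> 'x option) \<Rightarrow> ('c \<Rightarrow> 'x option)" where
  "act_lab \<phi> g lab = map_option (\<phi> g) \<circ> lab"

definition moves_to :: "('g \<Rightarrow> 'x \<Rightarrow> 'x) \<Rightarrow> ('c \<Rightarrow> 'c \<Rightarrow> bool) \<Rightarrow> ('c \<Rightarrow> 'x option) \<Rightarrow> 'g \<Rightarrow> 'c \<Rightarrow> 'c \<Rightarrow> bool" where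
  "moves_to \<phi> E lab g c d \<longleftrightarrow> same_obj E (act_lab \<phi> g lab) lab c d"

text \<open>g \<cdot> F = F for a set F of nodes (i.e. for the set whose elements are the objects denoted by F)\<close>
definition fixes_set :: "('g \<Rightarrow> 'x \<Rightarrow> 'x) \<Rightarrow> ('c \<Rightarrow> 'c \<Rightarrow> bool) \<Rightarrow> ('c \<Rightarrow> 'x option) \<Rightarrow> 'g \<Rightarrow> 'c set \<Rightarrow> bool" where
  "fixes_set \<phi> E lab g F \<longleftrightarrow> (\<forall>y\<in>F. \<exists>z\<in>F. moves_to \<phi> E lab g y z) \<and>
                              (\<forall>z\<in>F. \<exists>y\<in>F. moves_to \<phi> E lab g y z)"

definition symmetric_node :: "('g, 'm) monoid_scheme \<Rightarrow> ('g \<Rightarrow> 'x \<Rightarrow> 'x) \<Rightarrow> 'x set set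
     \<Rightarrow> ('c \<Rightarrow> 'c \<Rightarrow> bool) \<Rightarrow> ('c \<Rightarrow> 'x option) \<Rightarrow> 'c \<Rightarrow> bool" where
  "symmetric_node G \<phi> I E lab c \<longleftrightarrow>
     (\<exists>b\<in>I. \<forall>g\<in>pstab G \<phi> b. moves_to \<phi> E lab g c c)"

definition in_W :: "('g, 'm) monoid_scheme \<Rightarrow> ('g \<Rightarrow> 'x \<Rightarrow> 'x) \<Rightarrow> 'x set set
     \<Rightarrow> ('c \<Rightarrow> 'c \<Rightarrow> bool) \<Rightarrow> ('c \<Rightarrow> 'x option) \<Rightarrow> 'c \<Rightarrow> bool" where
  "in_W G \<phi> I E lab c \<longleftrightarrow> (\<forall>d. E\<^sup>*\<^sup>* d c \<longrightarrow> symmetric_node G \<phi> I E lab d)"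

end

theory Submission
  imports Defs
begin

lemma vbisim_map: "vbisim E l1 l2 R \<Longrightarrow> vbisim E (map_option f \<circ> l1) (map_option f \<circ> l2) R"
  unfolding vbisim_def by (metis comp_apply)

lemma vbisim_conv: "vbisim E l1 l2 R \<Longrightarrow> vbisim E l2 l1 (\<lambda>c d. R d c)"
  unfolding vbisim_def by metis

lemma vbisim_comp: "vbisim E l1 l2 R1 \<Longrightarrow> vbisim E l2 l3 R2 \<Longrightarrow> vbisim E l1 l3 (R1 OO R2)"
  unfolding vbisim_def relcompp_apply
  apply (intro allI impI)
  apply (elim exE conjE)
  subgoal for c d b
    apply (intro conjI allI impI)
      apply metis
     apply (metis)
    apply metis
    done
  done

lemma vbisim_eq: "vbisim E l l (=)"
  unfolding vbisim_def by blast

locale pres_act = group_action G X \<phi> for G :: "('g,'m) monoid_scheme" (structure) and X :: "'x set" and \<phi> +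
  fixes E :: "'c \<Rightarrow> 'c \<Rightarrow> bool" and lab :: "'c \<Rightarrow> 'x option"
  assumes pres: "presentation X E lab"
begin

lemma grp: "group G"
  using group_hom group_hom.axioms(1) by auto

lemma labX: "lab c = Some x \<Longrightarrow> x \<in> X"
  using pres unfolding presentation_def by blast

lemma act_comp: "h \<in> carrier G \<Longrightarrow> g \<in> carrier G \<Longrightarrow>
   act_lab \<phi> h (act_lab \<phi> g lab) = act_lab \<phi> (h \<otimes>\<^bsub>G\<^esub> g) lab"
  unfolding act_lab_def
proof (rule ext)
  fix c assume h: "h \<in> carrier G" and g: "g \<in> carrier G"
  show "(map_option (\<phi> h) \<circ> (map_option (\<phi> g) \<circ> lab)) c = (map_option (\<phi> (h \<otimes>\<^bsub>G\<^esub> g)) \<circ> lab) c"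
    using labX composition_rule[OF _ h g] by (cases "lab c") auto
qed

lemma act_one: "act_lab \<phi> \<one>\<^bsub>G\<^esub> lab = lab"
  unfolding act_lab_def
proof (rule ext)
  fix c
  show "(map_option (\<phi> \<one>\<^bsub>G\<^esub>) \<circ> lab) c = lab c"
    using labX id_eq_one by (cases "lab c") (auto simp: fun_eq_iff, metis restrict_apply')
qed

lemma moves_comp:
  assumes "g \<in> carrier G" "h \<in> carrier G" "moves_to \<phi> E lab g x y" "moves_to \<phi> E lab h y z"
  shows "moves_to \<phi> E lab (h \<otimes>\<^bsub>G\<^esub> g) x z"
proof -
  obtain R1 where R1: "vbisim E (act_lab \<phi> g lab) lab R1" "R1 x y"
    using assms(3) unfolding moves_to_def same_obj_def by blast
  obtain R2 where R2: "vbisim E (act_lab \<phi> h lab) lab R2" "R2 y z"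
    using assms(4) unfolding moves_to_def same_obj_def by blast
  have "vbisim E (act_lab \<phi> h (act_lab \<phi> g lab)) (act_lab \<phi> h lab) R1"
    using vbisim_map[OF R1(1), of "\<phi> h"] unfolding act_lab_def by simp
  hence "vbisim E (act_lab \<phi> (h \<otimes>\<^bsub>G\<^esub> g) lab) (act_lab \<phi> h lab) R1"
    using act_comp assms by simp
  from vbisim_comp[OF this R2(1)] R1(2) R2(2) show ?thesis
    unfolding moves_to_def same_obj_def by blast
qed

lemma moves_inv:
  assumes "g \<in> carrier G" "moves_to \<phi> E lab g x y"
  shows "moves_to \<phi> E lab (inv\<^bsub>G\<^esub> g) y x"
proof -
  interpret group G by (rule grp)
  obtain R1 where R1: "vbisim E (act_lab \<phi> g lab) lab R1" "R1 x y"
    using assms(2) unfolding moves_to_def same_obj_def by blast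
  have "vbisim E lab (act_lab \<phi> g lab) (\<lambda>c d. R1 d c)" by (rule vbisim_conv[OF R1(1)])
  from vbisim_map[OF this, of "\<phi> (inv g)"]
  have "vbisim E (act_lab \<phi> (inv g) lab) (act_lab \<phi> (inv g) (act_lab \<phi> g lab)) (\<lambda>c d. R1 d c)"
    unfolding act_lab_def by simp
  hence "vbisim E (act_lab \<phi> (inv g) lab) lab (\<lambda>c d. R1 d c)"
    using act_comp[of "inv g" g] assms(1) act_one by simp
  thus ?thesis using R1(2) unfolding moves_to_def same_obj_def by blast
qed

lemma moves_one: "moves_to \<phi> E lab \<one>\<^bsub>G\<^esub> x x"
  unfolding moves_to_def same_obj_def act_one using vbisim_eq by blast

lemma moves_one_eq: "moves_to \<phi> E lab \<one>\<^bsub>G\<^esub> x y \<Longrightarrow> x = y"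
  using pres unfolding moves_to_def act_one presentation_def by blast

lemma moves_fun:
  assumes "g \<in> carrier G" "moves_to \<phi> E lab g x y" "moves_to \<phi> E lab g x z"
  shows "y = z"
proof -
  interpret group G by (rule grp)
  have "moves_to \<phi> E lab (g \<otimes> inv g) y z"
    using moves_comp[OF _ assms(1) moves_inv[OF assms(1,2)] assms(3)] assms(1) by simp
  thus ?thesis using moves_one_eq assms(1) by simp
qed

lemma moves_inj:
  assumes "g \<in> carrier G" "moves_to \<phi> E lab g x z" "moves_to \<phi> E lab g y z"
  shows "x = y"
  using moves_fun[OF _ moves_inv[OF assms(1,2)] moves_inv[OF assms(1,3)]] assms(1) grp
  by (simp add: group.inv_closed)

lemma moves_elem:
  assumes "moves_to \<phi> E lab g A A" "E y A"
  shows "\<exists>z. E z A \<and> moves_to \<phi> E lab g y z"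
  using assms unfolding moves_to_def same_obj_def vbisim_def by blast

lemma moves_elem_back:
  assumes "moves_to \<phi> E lab g A A" "E z A"
  shows "\<exists>y. E y A \<and> moves_to \<phi> E lab g y z"
  using assms unfolding moves_to_def same_obj_def vbisim_def by blast

lemma moves_support:
  assumes g: "g \<in> carrier G" and c: "c \<subseteq> X"
    and fx: "\<forall>h\<in>pstab G \<phi> c. moves_to \<phi> E lab h y y"
    and m: "moves_to \<phi> E lab g y z"
  shows "\<forall>h\<in>pstab G \<phi> (\<phi> g ` c). moves_to \<phi> E lab h z z"
proof
  interpret group G by (rule grp)
  fix h assume h: "h \<in> pstab G \<phi> (\<phi> g ` c)"
  hence hc: "h \<in> carrier G" by (simp add: pstab_def)
  have "inv g \<otimes> h \<otimes> g \<in> pstab G \<phi> c"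
    unfolding pstab_def
  proof (intro CollectI conjI ballI)
    show "inv g \<otimes> h \<otimes> g \<in> carrier G" using g hc by simp
    fix x assume x: "x \<in> c"
    hence xX: "x \<in> X" using c by auto
    have gx: "\<phi> g x \<in> X" using element_image[OF g xX] by simp
    have "\<phi> h (\<phi> g x) = \<phi> g x" using h x unfolding pstab_def by auto
    hence "\<phi> (inv g \<otimes> h \<otimes> g) x = \<phi> (inv g) (\<phi> g x)"
      using composition_rule xX gx g hc by simp
    also have "\<dots> = x" using orbit_sym_aux[OF g xX refl] .
    finally show "\<phi> (inv g \<otimes> h \<otimes> g) x = x" .
  qed
  hence m1: "moves_to \<phi> E lab (inv g \<otimes> h \<otimes> g) y y" using fx by blast
  have m0: "moves_to \<phi> E lab (inv g) z y" using moves_inv[OF g m] .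
  have "moves_to \<phi> E lab ((inv g \<otimes> h \<otimes> g) \<otimes> inv g) z y"
    using moves_comp[OF _ _ m0 m1] g hc by simp
  hence "moves_to \<phi> E lab (g \<otimes> ((inv g \<otimes> h \<otimes> g) \<otimes> inv g)) z z"
    using moves_comp[OF _ g _ m] g hc by simp
  moreover have "g \<otimes> ((inv g \<otimes> h \<otimes> g) \<otimes> inv g) = h"
    using g hc by (simp add: m_assoc[symmetric]) (simp add: m_assoc r_inv)
  ultimately show "moves_to \<phi> E lab h z z" by simp
qed

end

theorem mainTheorem19:
  fixes G :: "('g, 'm) monoid_scheme" and X :: "'x set" and \<phi> :: "'g \<Rightarrow> 'x \<Rightarrow> 'x"
    and I :: "'x set set"
    and E :: "'c \<Rightarrow> 'c \<Rightarrow> bool" and lab :: "'c \<Rightarrow> 'x option" and A :: 'c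
  assumes "stratified G X \<phi> I"
    and "presentation X E lab"
    and "in_W G \<phi> I E lab A"
  shows "(\<exists>F :: nat \<Rightarrow> 'c set.
            (\<forall>n. finite (F n) \<and> F n \<subseteq> {d. E d A}) \<and> (\<Union>n. F n) = {d. E d A} \<and>
            (\<exists>b\<in>I. \<forall>g\<in>pstab G \<phi> b. \<forall>n. fixes_set \<phi> E lab g (F n)))
       \<or> (\<exists>f :: nat \<Rightarrow> 'c. inj f \<and> (\<forall>n. E (f n) A) \<and>
            (\<exists>b\<in>I. \<forall>g\<in>pstab G \<phi> b. \<forall>n. moves_to \<phi> E lab g (f n) (f n)))"
proof -
  from assms(1) obtain In :: "nat \<Rightarrow> 'x set set" where
    dyn: "dynamical_ideal G X \<phi> I" and
    Inid: "\<forall>n. set_ideal X (In n) \<and> invariant_family G \<phi> (In n)" and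
    Inmono: "\<forall>n. In n \<subseteq> In (Suc n)" and IU: "I = (\<Union>n. In n)" and
    strat: "\<forall>n a (bs::nat \<Rightarrow> 'x set). a \<in> In n \<longrightarrow> (\<forall>m. bs m \<in> In n) \<longrightarrow>
            (\<exists>gs :: nat \<Rightarrow> 'g. (\<forall>m. gs m \<in> pstab G \<phi> a) \<and>
                 (\<Union>m. \<phi> (gs m) ` bs m) \<in> In (Suc n))"
    unfolding stratified_def by blast
  have ga: "group_action G X \<phi>" using dyn unfolding dynamical_ideal_def by blast
  interpret P: pres_act G X \<phi> E lab
    using ga assms(2) by (simp add: pres_act_def pres_act_axioms_def)
  interpret group G by (rule P.grp)
  have InLe: "k \<le> j \<Longrightarrow> In k \<subseteq> In j" for k j
    by (rule lift_Suc_mono_le[of In]) (use Inmono in auto)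
  have InX: "c \<in> In k \<Longrightarrow> c \<subseteq> X" for c k
    using Inid unfolding set_ideal_def by blast
  have Inun: "c \<in> In k \<Longrightarrow> d \<in> In k \<Longrightarrow> c \<union> d \<in> In k" for c d k
    using Inid unfolding set_ideal_def by blast
  have Ininv: "g \<in> carrier G \<Longrightarrow> c \<in> In k \<Longrightarrow> \<phi> g ` c \<in> In k" for g c k
    using Inid unfolding invariant_family_def by blast
  have pstab_anti: "c \<subseteq> d \<Longrightarrow> pstab G \<phi> d \<subseteq> pstab G \<phi> c" for c d
    by (auto simp: pstab_def)
  have pstab_car: "g \<in> pstab G \<phi> c \<Longrightarrow> g \<in> carrier G" for g c
    by (simp add: pstab_def)
  have symA: "symmetric_node G \<phi> I E lab A"
    using assms(3)[unfolded in_W_def, rule_format, of A] by simp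
  then obtain a where aI: "a \<in> I" and aA: "\<forall>g\<in>pstab G \<phi> a. moves_to \<phi> E lab g A A"
    unfolding symmetric_node_def by blast
  obtain k0 where ak0: "a \<in> In k0" using aI IU by blast
  define Ad where "Ad d = {x. E x A \<and> (\<forall>g\<in>pstab G \<phi> d. moves_to \<phi> E lab g x x)}" for d
  show ?thesis
  proof (cases "\<exists>d\<in>I. infinite (Ad d)")
    case True
    then obtain d where dI: "d \<in> I" and inf: "infinite (Ad d)" by blast
    then obtain f :: "nat \<Rightarrow> 'c" where "inj f" "range f \<subseteq> Ad d"
      using infinite_countable_subset by blast
    hence "inj f \<and> (\<forall>n. E (f n) A) \<and>
            (\<exists>b\<in>I. \<forall>g\<in>pstab G \<phi> b. \<forall>n. moves_to \<phi> E lab g (f n) (f n))"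
      using dI unfolding Ad_def by blast
    thus ?thesis by blast
  next
    case False
    hence nf: "\<forall>d\<in>I. finite (Ad d)" by simp
    define S where "S k = {x. E x A \<and> (\<exists>c\<in>In k. \<forall>g\<in>pstab G \<phi> c. moves_to \<phi> E lab g x x)}" for k
    have Smono: "S k \<subseteq> S j" if "k \<le> j" for k j
      using InLe[of k j] that unfolding S_def by blast
    have Sfin: "finite (S k)" if k: "k0 \<le> k" for k
    proof (rule ccontr)
      assume inf: "infinite (S k)"
      obtain B :: "nat \<Rightarrow> 'c" where Binj: "inj B" and BS: "range B \<subseteq> S k"
        using infinite_countable_subset[OF inf] by blast
      have "\<forall>i. \<exists>c. c \<in> In k \<and> (\<forall>g\<in>pstab G \<phi> c. moves_to \<phi> E lab g (B i) (B i))"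
        using BS unfolding S_def by blast
      then obtain c where cIn: "\<And>i. c i \<in> In k"
        and cB: "\<And>i. \<forall>g\<in>pstab G \<phi> (c i). moves_to \<phi> E lab g (B i) (B i)" by metis
      define e where "e m = (\<Union>i\<le>m. c i)" for m
      have eIn: "e m \<in> In k" for m
      proof (induction m)
        case 0 then show ?case using cIn by (simp add: e_def)
      next
        case (Suc m)
        have "e (Suc m) = e m \<union> c (Suc m)" by (auto simp: e_def atMost_Suc)
        then show ?case using Suc cIn Inun by simp
      qed
      have aIn: "a \<in> In k" using ak0 InLe[OF k] by blast
      obtain \<gamma> :: "nat \<Rightarrow> 'g" where \<gamma>: "\<And>m. \<gamma> m \<in> pstab G \<phi> a"
        and dIn: "(\<Union>m. \<phi> (\<gamma> m) ` e m) \<in> In (Suc k)"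
        using strat[THEN spec[of _ k], THEN spec[of _ a], THEN spec[of _ e]] aIn eIn by blast
      define d where "d = (\<Union>m. \<phi> (\<gamma> m) ` e m)"
      have dI: "d \<in> I" using dIn IU d_def by blast
      have fin: "finite (Ad d)" using nf dI by blast
      have cardle: "card {..m} \<le> card (Ad d)" for m :: nat
      proof -
        have \<gamma>c: "\<gamma> m \<in> carrier G" using \<gamma> pstab_car by blast
        have \<gamma>A: "moves_to \<phi> E lab (\<gamma> m) A A" using \<gamma> aA by blast
        have "\<forall>i. \<exists>z. E z A \<and> moves_to \<phi> E lab (\<gamma> m) (B i) z"
        proof
          fix i
          have "E (B i) A" using BS unfolding S_def by blast
          thus "\<exists>z. E z A \<and> moves_to \<phi> E lab (\<gamma> m) (B i) z" using P.moves_elem[OF \<gamma>A] by blast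
        qed
        then obtain h where hA: "\<And>i. E (h i) A" and hm: "\<And>i. moves_to \<phi> E lab (\<gamma> m) (B i) (h i)"
          by metis
        have "inj_on h {..m}"
        proof (rule inj_onI)
          fix i j assume "h i = h j"
          hence "B i = B j" using P.moves_inj[OF \<gamma>c hm[of i]] hm[of j] by simp
          thus "i = j" using Binj by (simp add: inj_eq)
        qed
        moreover have "h ` {..m} \<subseteq> Ad d"
        proof
          fix y assume "y \<in> h ` {..m}"
          then obtain i where i: "i \<le> m" "y = h i" by blast
          have sup: "\<forall>g\<in>pstab G \<phi> (\<phi> (\<gamma> m) ` c i). moves_to \<phi> E lab g (h i) (h i)"
            using P.moves_support[OF \<gamma>c InX[OF cIn] cB hm] .
          have "\<phi> (\<gamma> m) ` c i \<subseteq> d" using i unfolding d_def e_def by blast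
          hence "pstab G \<phi> d \<subseteq> pstab G \<phi> (\<phi> (\<gamma> m) ` c i)" by (rule pstab_anti)
          thus "y \<in> Ad d" using sup hA i unfolding Ad_def by blast
        qed
        ultimately show ?thesis using card_inj_on_le fin by blast
      qed
      from cardle[of "card (Ad d)"] show False by simp
    qed
    have "(\<forall>n. finite (S (n + k0)) \<and> S (n + k0) \<subseteq> {d. E d A}) \<and> (\<Union>n. S (n + k0)) = {d. E d A} \<and>
            (\<exists>b\<in>I. \<forall>g\<in>pstab G \<phi> b. \<forall>n. fixes_set \<phi> E lab g (S (n + k0)))"
    proof (intro conjI allI)
      fix n show "finite (S (n + k0))" using Sfin by simp
    next
      fix n show "S (n + k0) \<subseteq> {d. E d A}" unfolding S_def by blast
    next
      show "(\<Union>n. S (n + k0)) = {d. E d A}"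
      proof
        show "(\<Union>n. S (n + k0)) \<subseteq> {d. E d A}" unfolding S_def by blast
      next
        show "{d. E d A} \<subseteq> (\<Union>n. S (n + k0))"
        proof
          fix x assume x: "x \<in> {d. E d A}"
          hence "E\<^sup>*\<^sup>* x A" by auto
          hence "symmetric_node G \<phi> I E lab x" using assms(3)[unfolded in_W_def, rule_format] by simp
          then obtain b where "b \<in> I" and bx: "\<forall>g\<in>pstab G \<phi> b. moves_to \<phi> E lab g x x"
            unfolding symmetric_node_def by blast
          then obtain j where "b \<in> In j" using IU by blast
          hence "x \<in> S j" using x bx unfolding S_def by blast
          hence "x \<in> S (j + k0)" using Smono[of j "j + k0"] by auto
          thus "x \<in> (\<Union>n. S (n + k0))" by blast
        qed
      qed
    next
      show "\<exists>b\<in>I. \<forall>g\<in>pstab G \<phi> b. \<forall>n. fixes_set \<phi> E lab g (S (n + k0))"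
      proof (intro bexI[OF _ aI] ballI allI)
        fix g n assume g: "g \<in> pstab G \<phi> a"
        have gc: "g \<in> carrier G" using g pstab_car by blast
        have gA: "moves_to \<phi> E lab g A A" using g aA by blast
        let ?k = "n + k0"
        show "fixes_set \<phi> E lab g (S ?k)"
          unfolding fixes_set_def
        proof (intro conjI ballI)
          fix y assume y: "y \<in> S ?k"
          then obtain c where c: "c \<in> In ?k" "\<forall>h\<in>pstab G \<phi> c. moves_to \<phi> E lab h y y"
            and yA: "E y A" unfolding S_def by blast
          obtain z where zA: "E z A" and m: "moves_to \<phi> E lab g y z"
            using P.moves_elem[OF gA yA] by blast
          have "\<forall>h\<in>pstab G \<phi> (\<phi> g ` c). moves_to \<phi> E lab h z z"
            using P.moves_support[OF gc InX[OF c(1)] c(2) m] .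
          moreover have "\<phi> g ` c \<in> In ?k" using Ininv gc c(1) by blast
          ultimately have "z \<in> S ?k" using zA unfolding S_def by blast
          thus "\<exists>z\<in>S ?k. moves_to \<phi> E lab g y z" using m by blast
        next
          fix z assume z: "z \<in> S ?k"
          then obtain c where c: "c \<in> In ?k" "\<forall>h\<in>pstab G \<phi> c. moves_to \<phi> E lab h z z"
            and zA: "E z A" unfolding S_def by blast
          obtain y where yA: "E y A" and m: "moves_to \<phi> E lab g y z"
            using P.moves_elem_back[OF gA zA] by blast
          have gi: "inv\<^bsub>G\<^esub> g \<in> carrier G" using gc by simp
          have m': "moves_to \<phi> E lab (inv\<^bsub>G\<^esub> g) z y" using P.moves_inv[OF gc m] .
          have "\<forall>h\<in>pstab G \<phi> (\<phi> (inv\<^bsub>G\<^esub> g) ` c). moves_to \<phi> E lab h y y"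
            using P.moves_support[OF gi InX[OF c(1)] c(2) m'] .
          moreover have "\<phi> (inv\<^bsub>G\<^esub> g) ` c \<in> In ?k" using Ininv gi c(1) by blast
          ultimately have "y \<in> S ?k" using yA unfolding S_def by blast
          thus "\<exists>y\<in>S ?k. moves_to \<phi> E lab g y z" using m by blast
        qed
      qed
    qed
    thus ?thesis by - (rule disjI1, rule exI[where x="\<lambda>n. S (n + k0)"], assumption)
  qed
qed

end
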